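(* Assume the hypotheses of Theorem 1 (the triangular array $\sigma_{N1}\ge\cdots\ge\sigma_{NN}>0$ with $\lim_{N\to\infty}\sigma_{N1}(\sum_n\sigma_{Nn}^{-7})(\sum_n\sigma_{Nn}^{-4})^{-3/2}=0$, and a probability density $\pi$ with $|\hat\pi(\omega)|\le C_\pi<1$ for $|\omega|\ge2$). Assume in addition that there exist $\delta,C>0$ with $|\hat\pi(\omega)|\le C|\omega|^{-\delta}$ for all $\omega\ne0$, and that there is a sequence $r_K\to0$ as $K\to\infty$ such that $\sigma_{NK}/\sigma_{N1}<r_K$ for all $N\ge K$. With $$h_N=\Big(\frac1\alpha\sum_{n=1}^N\frac{1}{(2\sigma_{Nn})^4}\int\sin^2\Big(\frac{t}{\sigma_{Nn}}\Big)\frac{\pi(t/\sigma_{N1})}{\sigma_{N1}}\,dt\Big)^{-1/4},\qquad \bar h_N=\Big(\frac1\alpha\sum_{n=1}^N\frac{1}{(2\sigma_{Nn})^4}\cdot\frac12\Big)^{-1/4},$$ we have $\bar h_N/h_N\to1$ as $N\to\infty$.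
   Context: $\hat\pi(\omega)=\int e^{-i\omega t}\pi(t)\,dt$ is the Fourier transform of the integration-time density $\pi$; $\alpha>0$ is fixed. *)

theory Defs
  imports "HOL-Analysis.Analysis"
begin

definition fourier_tf :: "(real \<Rightarrow> real) \<Rightarrow> real \<Rightarrow> complex" where
  "fourier_tf p \<omega> = (LINT t|lborel. exp (- \<i> * complex_of_real (\<omega> * t)) * complex_of_real (p t))"

text \<open>Triangular array: sigma N n for 1 <= n <= N.\<close>
definition h_seq :: "real \<Rightarrow> (nat \<Rightarrow> nat \<Rightarrow> real) \<Rightarrow> (real \<Rightarrow> real) \<Rightarrow> nat \<Rightarrow> real" where
  "h_seq \<alpha> \<sigma> p N =
     ((1 / \<alpha>) * (\<Sum>n=1..N. 1 / (2 * \<sigma> N n) ^ 4 *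
        (LINT t|lborel. (sin (t / \<sigma> N n))\<^sup>2 * p (t / \<sigma> N 1) / \<sigma> N 1))) powr (-1/4)"

definition hbar_seq :: "real \<Rightarrow> (nat \<Rightarrow> nat \<Rightarrow> real) \<Rightarrow> nat \<Rightarrow> real" where
  "hbar_seq \<alpha> \<sigma> N = ((1 / \<alpha>) * (\<Sum>n=1..N. 1 / (2 * \<sigma> N n) ^ 4 * (1/2))) powr (-1/4)"

end

theory Submission
  imports Defs
begin

lemma fourier_Re:
  assumes pm: "p \<in> borel_measurable lborel" and pi: "integrable lborel p"
  shows "Re (fourier_tf p w) = (LINT t|lborel. cos (w * t) * p t)"
proof -
  have ii: "integrable lborel (\<lambda>t. complex_of_real (p t))" using pi by simp
  have "integrable lborel (\<lambda>t. exp (- \<i> * complex_of_real (w * t)) * complex_of_real (p t))"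
    by (rule Bochner_Integration.integrable_bound[OF ii]) (use pm in \<open>auto simp: norm_mult norm_exp_i_times[symmetric]\<close>)
  then show ?thesis unfolding fourier_tf_def
    by (subst integral_Re[symmetric]) (auto simp: Re_exp)
qed

lemma int_id:
  fixes p :: "real \<Rightarrow> real" and a b :: real
  assumes a: "a > 0" and b: "b > 0" and p_meas: "p \<in> borel_measurable lborel"
    and p_int: "integrable lborel p" and p_total: "(LINT t|lborel. p t) = 1"
  shows "(LINT t|lborel. (sin (t / b))\<^sup>2 * p (t / a) / a) = 1/2 - Re (fourier_tf p (2*a/b)) / 2"
proof -
  have "(LINT t|lborel. (sin (t / b))\<^sup>2 * p (t / a) / a)
     = \<bar>a\<bar> *\<^sub>R (LINT x|lborel. (sin ((0 + a*x) / b))\<^sup>2 * p ((0 + a*x) / a) / a)"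
    by (rule lborel_integral_real_affine) (use a in auto)
  also have "\<dots> = (LINT x|lborel. (sin (a*x / b))\<^sup>2 * p x)"
    using a by simp
  also have "\<dots> = (LINT x|lborel. p x / 2 - cos (2*a/b * x) * p x / 2)"
  proof (rule Bochner_Integration.integral_cong[OF refl])
    fix x
    have "cos (2*a/b * x) = 1 - 2 * (sin (a*x/b))\<^sup>2" using cos_double_sin[of "a*x/b"] by (simp add: mult.assoc)
    then have "(sin (a*x/b))\<^sup>2 = 1/2 - cos (2*a/b * x)/2" by linarith
    then show "(sin (a*x / b))\<^sup>2 * p x = p x / 2 - cos (2*a/b * x) * p x / 2"
      by (simp only:) (simp add: algebra_simps)
  qed
  also have "\<dots> = (LINT x|lborel. p x) / 2 - (LINT x|lborel. cos (2*a/b * x) * p x) / 2"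
  proof -
    have ci: "integrable lborel (\<lambda>x. cos (2*a/b * x) * p x)"
      by (rule Bochner_Integration.integrable_bound[OF p_int]) (use p_meas in \<open>auto simp: abs_mult intro!: mult_left_le_one_le\<close>)
    show ?thesis
      by (subst Bochner_Integration.integral_diff) (use ci p_int in auto)
  qed
  finally show ?thesis using p_total fourier_Re[OF p_meas p_int] by simp
qed

lemma key:
  fixes w F :: "nat \<Rightarrow> real" and e :: real
  assumes K: "1 \<le> K" "K \<le> N"
    and wpos: "\<And>n. 1 \<le> n \<Longrightarrow> n \<le> N \<Longrightarrow> w n > 0"
    and wmono: "\<And>m n. 1 \<le> m \<Longrightarrow> m \<le> n \<Longrightarrow> n \<le> N \<Longrightarrow> w m \<le> w n"
    and F1: "\<And>n. 1 \<le> n \<Longrightarrow> n \<le> N \<Longrightarrow> \<bar>F n\<bar> \<le> 1"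
    and Fe: "\<And>n. K \<le> n \<Longrightarrow> n \<le> N \<Longrightarrow> \<bar>F n\<bar> \<le> e"
  shows "\<bar>\<Sum>n=1..N. w n * F n\<bar> \<le> ((real K - 1) / (real N - real K + 1) + e) * (\<Sum>n=1..N. w n)"
proof -
  have split: "{1..N} = {1..<K} \<union> {K..N}" using K by auto
  have disj: "{1..<K} \<inter> {K..N} = {}" by auto
  have e0: "e \<ge> 0" using Fe[of K] K by linarith
  have S1: "(\<Sum>n\<in>{1..<K}. w n) \<le> real (card {1..<K}) * w K"
    by (rule sum_bounded_above) (use K in \<open>auto intro: wmono\<close>)
  have S2: "real (card {K..N}) * w K \<le> (\<Sum>n\<in>{K..N}. w n)"
    by (rule sum_bounded_below) (use K in \<open>auto intro: wmono\<close>)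
  have c1: "card {1..<K} = K - 1" by simp
  have c2: "card {K..N} = N + 1 - K" by simp
  have wK: "w K > 0" using K wpos by auto
  have Spos: "(\<Sum>n\<in>{K..N}. w n) \<ge> 0" using wpos K by (intro sum_nonneg) (simp add: less_imp_le)
  have Sa: "(\<Sum>n\<in>{1..<K}. w n) \<ge> 0" using wpos K by (intro sum_nonneg) (simp add: less_imp_le)
  have D: "real N - real K + 1 > 0" using K by simp
  have A: "(\<Sum>n\<in>{1..<K}. w n) \<le> (real K - 1) / (real N - real K + 1) * (\<Sum>n\<in>{K..N}. w n)"
  proof -
    have "(\<Sum>n\<in>{1..<K}. w n) \<le> (real K - 1) * w K" using S1 c1 K by (simp add: of_nat_diff)
    also have "\<dots> = (real K - 1) / (real N - real K + 1) * ((real N - real K + 1) * w K)"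
      using D by simp
    also have "\<dots> \<le> (real K - 1) / (real N - real K + 1) * (\<Sum>n\<in>{K..N}. w n)"
      apply (rule mult_left_mono)
      using S2 c2 K D by (auto simp: of_nat_diff) (metis add.commute add_diff_eq)
    finally show ?thesis .
  qed
  have "\<bar>\<Sum>n=1..N. w n * F n\<bar> \<le> (\<Sum>n=1..N. \<bar>w n * F n\<bar>)" by (rule sum_abs)
  also have "\<dots> = (\<Sum>n\<in>{1..<K}. \<bar>w n * F n\<bar>) + (\<Sum>n\<in>{K..N}. \<bar>w n * F n\<bar>)"
    unfolding split by (rule sum.union_disjoint) auto
  also have "\<dots> \<le> (\<Sum>n\<in>{1..<K}. w n) + (\<Sum>n\<in>{K..N}. e * w n)"
  proof (rule add_mono; rule sum_mono)
    fix n assume n: "n \<in> {1..<K}"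
    then have "w n > 0" "\<bar>F n\<bar> \<le> 1" using K wpos F1 by auto
    then show "\<bar>w n * F n\<bar> \<le> w n" by (simp add: abs_mult mult_left_le)
  next
    fix n assume n: "n \<in> {K..N}"
    then have "w n > 0" "\<bar>F n\<bar> \<le> e" using K wpos Fe by auto
    then show "\<bar>w n * F n\<bar> \<le> e * w n" by (simp add: abs_mult mult.commute mult_left_mono)
  qed
  also have "\<dots> \<le> (real K - 1) / (real N - real K + 1) * (\<Sum>n\<in>{K..N}. w n) + e * (\<Sum>n=1..N. w n)"
  proof -
    have "(\<Sum>n\<in>{K..N}. w n) \<le> (\<Sum>n=1..N. w n)"
      by (rule sum_mono2) (use K wpos in \<open>auto intro: less_imp_le\<close>)
    then show ?thesis using A e0 by (simp add: sum_distrib_left[symmetric] mult_left_mono add_mono)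
  qed
  also have "\<dots> \<le> (real K - 1) / (real N - real K + 1) * (\<Sum>n=1..N. w n) + e * (\<Sum>n=1..N. w n)"
  proof -
    have "(\<Sum>n\<in>{K..N}. w n) \<le> (\<Sum>n=1..N. w n)"
      by (rule sum_mono2) (use K wpos in \<open>auto intro: less_imp_le\<close>)
    moreover have "(real K - 1) / (real N - real K + 1) \<ge> 0" using K D by simp
    ultimately show ?thesis using mult_left_mono by (metis add_mono order_refl)
  qed
  finally show ?thesis by (simp add: algebra_simps)
qed
theorem corollary1:
  fixes \<alpha> :: real and \<sigma> :: "nat \<Rightarrow> nat \<Rightarrow> real" and p :: "real \<Rightarrow> real"
    and C\<^sub>\<pi> \<delta> C :: real and r :: "nat \<Rightarrow> real"
  assumes alpha_pos: "\<alpha> > 0"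
    and sigma_pos: "\<And>N n. 1 \<le> n \<Longrightarrow> n \<le> N \<Longrightarrow> \<sigma> N n > 0"
    and sigma_mono: "\<And>N m n. 1 \<le> m \<Longrightarrow> m \<le> n \<Longrightarrow> n \<le> N \<Longrightarrow> \<sigma> N n \<le> \<sigma> N m"
    and sigma_lim: "(\<lambda>N. \<sigma> N 1 * (\<Sum>n=1..N. \<sigma> N n powr (-7))
                          * (\<Sum>n=1..N. \<sigma> N n powr (-4)) powr (-3/2)) \<longlonglongrightarrow> 0"
    and p_meas: "p \<in> borel_measurable lborel"
    and p_nonneg: "\<And>t. p t \<ge> 0"
    and p_int: "integrable lborel p"
    and p_total: "(LINT t|lborel. p t) = 1"
    and Cpi_lt1: "C\<^sub>\<pi> < 1"
    and Cpi_bound: "\<And>\<omega>. \<bar>\<omega>\<bar> \<ge> 2 \<Longrightarrow> cmod (fourier_tf p \<omega>) \<le> C\<^sub>\<pi>"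
    and delta_pos: "\<delta> > 0" and C_pos: "C > 0"
    and decay: "\<And>\<omega>. \<omega> \<noteq> 0 \<Longrightarrow> cmod (fourier_tf p \<omega>) \<le> C * \<bar>\<omega>\<bar> powr (-\<delta>)"
    and r_lim: "r \<longlonglongrightarrow> 0"
    and r_bound: "\<And>K N. 1 \<le> K \<Longrightarrow> K \<le> N \<Longrightarrow> \<sigma> N K / \<sigma> N 1 < r K"
  shows "(\<lambda>N. hbar_seq \<alpha> \<sigma> N / h_seq \<alpha> \<sigma> p N) \<longlonglongrightarrow> 1"
proof -
  define w where "w N n = 1 / (2 * \<sigma> N n) ^ 4" for N n
  define F where "F N n = Re (fourier_tf p (2 * \<sigma> N 1 / \<sigma> N n))" for N n
  define S where "S N = (\<Sum>n=1..N. w N n)" for N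
  define T where "T N = (\<Sum>n=1..N. w N n * F N n)" for N
  define A where "A N = T N / S N" for N
  define e where "e K = C * (r K / 2) powr \<delta>" for K
  have wpos: "\<And>N n. 1 \<le> n \<Longrightarrow> n \<le> N \<Longrightarrow> w N n > 0"
  proof -
    fix N n :: nat assume "1 \<le> n" "n \<le> N"
    then have "\<sigma> N n > 0" by (rule sigma_pos)
    then show "w N n > 0" by (simp add: w_def)
  qed
  have wmono: "\<And>N m n. 1 \<le> m \<Longrightarrow> m \<le> n \<Longrightarrow> n \<le> N \<Longrightarrow> w N m \<le> w N n"
  proof -
    fix N m n :: nat assume h: "1 \<le> m" "m \<le> n" "n \<le> N"
    have s: "0 < \<sigma> N n" "\<sigma> N n \<le> \<sigma> N m" using sigma_pos sigma_mono h by auto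
    then have "(2*\<sigma> N n)^4 \<le> (2*\<sigma> N m)^4" by (intro power_mono) auto
    then show "w N m \<le> w N n" unfolding w_def using s by (intro divide_left_mono) auto
  qed
  have Spos: "\<And>N. 1 \<le> N \<Longrightarrow> S N > 0" unfolding S_def using wpos by (intro sum_pos) auto
  have F1: "\<And>N n. 1 \<le> n \<Longrightarrow> n \<le> N \<Longrightarrow> \<bar>F N n\<bar> \<le> 1"
  proof -
    fix N n :: nat assume h: "1 \<le> n" "n \<le> N"
    have pos: "\<sigma> N n > 0" "\<sigma> N 1 > 0" "\<sigma> N n \<le> \<sigma> N 1" using sigma_pos sigma_mono[of 1 n N] h by auto
    have "\<bar>2 * \<sigma> N 1 / \<sigma> N n\<bar> \<ge> 2" using pos by (simp add: field_simps)
    then have "cmod (fourier_tf p (2 * \<sigma> N 1 / \<sigma> N n)) \<le> C\<^sub>\<pi>" by (rule Cpi_bound)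
    then show "\<bar>F N n\<bar> \<le> 1" unfolding F_def using abs_Re_le_cmod Cpi_lt1
      by (meson order_trans less_imp_le)
  qed
  have Fe: "\<And>K N n. 1 \<le> K \<Longrightarrow> K \<le> n \<Longrightarrow> n \<le> N \<Longrightarrow> \<bar>F N n\<bar> \<le> e K"
  proof -
    fix K N n :: nat assume h: "1 \<le> K" "K \<le> n" "n \<le> N"
    have pos: "\<sigma> N n > 0" "\<sigma> N 1 > 0" "\<sigma> N n \<le> \<sigma> N K" using sigma_pos sigma_mono[of K n N] h by auto
    have rK: "\<sigma> N K / \<sigma> N 1 < r K" using r_bound h by auto
    have q: "\<sigma> N n / \<sigma> N 1 < r K" using pos rK
      by (smt (verit) divide_right_mono)
    define x where "x = 2 * \<sigma> N 1 / \<sigma> N n"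
    have x0: "x > 0" using pos by (simp add: x_def)
    have "cmod (fourier_tf p x) \<le> C * \<bar>x\<bar> powr (-\<delta>)" using decay[of x] x0 by simp
    also have "C * \<bar>x\<bar> powr (-\<delta>) = C * (1/x) powr \<delta>" using x0 by (simp add: powr_minus_divide powr_divide)
    also have "C * (1/x) powr \<delta> \<le> C * (r K / 2) powr \<delta>"
    proof (rule mult_left_mono)
      show "(1/x) powr \<delta> \<le> (r K / 2) powr \<delta>"
      proof (rule powr_mono2)
        show "1/x \<le> r K / 2" using q pos by (simp add: x_def field_simps)
      qed (use delta_pos x0 in auto)
    qed (use C_pos in auto)
    finally show "\<bar>F N n\<bar> \<le> e K" unfolding F_def e_def x_def[symmetric]
      using abs_Re_le_cmod order_trans by blast
  qed
  have Alim: "A \<longlonglongrightarrow> 0"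
  proof (rule LIMSEQ_I)
    fix \<epsilon> :: real assume \<epsilon>: "\<epsilon> > 0"
    have rpos: "\<And>K. 1 \<le> K \<Longrightarrow> r K > 0"
    proof -
      fix K :: nat assume "1 \<le> K"
      then have "\<sigma> K K / \<sigma> K 1 < r K" "\<sigma> K K > 0" "\<sigma> K 1 > 0" using r_bound sigma_pos by auto
      then show "r K > 0" by (smt (verit) divide_pos_pos)
    qed
    have ev0: "eventually (\<lambda>K. 0 \<le> r K / 2) sequentially"
      unfolding eventually_sequentially using rpos by (intro exI[of _ 1]) (auto simp: less_imp_le)
    have "(\<lambda>K. (r K / 2) powr \<delta>) \<longlonglongrightarrow> 0"
      by (rule tendsto_zero_powrI[OF _ tendsto_const ev0 delta_pos]) (use tendsto_divide[OF r_lim tendsto_const, of 2] in simp)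
    then have "(\<lambda>K. C * (r K / 2) powr \<delta>) \<longlonglongrightarrow> C * 0" by (intro tendsto_mult tendsto_const)
    then have "eventually (\<lambda>K. e K < \<epsilon>/2) sequentially" unfolding e_def using \<epsilon>
      by (intro order_tendstoD(2)) auto
    then obtain K0 where K0: "\<And>K. K \<ge> K0 \<Longrightarrow> e K < \<epsilon>/2" by (auto simp: eventually_sequentially)
    define K where "K = max 1 K0"
    have K1: "1 \<le> K" and eK: "e K < \<epsilon>/2" using K0 by (auto simp: K_def)
    define N0 where "N0 = K + nat \<lceil>2 * real K / \<epsilon>\<rceil>"
    show "\<exists>no. \<forall>N\<ge>no. norm (A N - 0) < \<epsilon>"
    proof (intro exI allI impI)
      fix N assume N: "N \<ge> N0"
      have KN: "K \<le> N" using N by (simp add: N0_def)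
      have b: "\<bar>T N\<bar> \<le> ((real K - 1)/(real N - real K + 1) + e K) * S N"
        unfolding T_def S_def by (rule key[OF K1 KN]) (auto intro: wpos wmono F1 Fe K1)
      have D: "real N - real K + 1 > 2 * real K / \<epsilon>"
      proof -
        have "real N \<ge> real K + real (nat \<lceil>2 * real K / \<epsilon>\<rceil>)" using N by (simp add: N0_def)
        moreover have "real (nat \<lceil>2 * real K / \<epsilon>\<rceil>) \<ge> 2 * real K / \<epsilon>" by linarith
        ultimately show ?thesis by linarith
      qed
      have Dp: "real N - real K + 1 > 0" using KN by simp
      have "\<epsilon> * (real N - real K + 1) > 2 * real K" using D \<epsilon> by (simp add: divide_less_eq mult.commute)
      then have frac: "(real K - 1)/(real N - real K + 1) < \<epsilon>/2" using Dp by (simp add: divide_less_eq)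
      have "\<bar>A N\<bar> \<le> (real K - 1)/(real N - real K + 1) + e K"
        using b Spos[of N] KN K1 by (simp add: A_def abs_divide pos_divide_le_eq)
      then show "norm (A N - 0) < \<epsilon>" using frac eK by (simp only: real_norm_def diff_zero)
    qed
  qed
  have hN: "\<And>N. 1 \<le> N \<Longrightarrow> h_seq \<alpha> \<sigma> p N = ((1/\<alpha>) * (S N/2 - T N/2)) powr (-1/4)"
  proof -
    fix N :: nat assume N: "1 \<le> N"
    have "(\<Sum>n=1..N. 1 / (2 * \<sigma> N n) ^ 4 * (LINT t|lborel. (sin (t / \<sigma> N n))\<^sup>2 * p (t / \<sigma> N 1) / \<sigma> N 1))
        = (\<Sum>n=1..N. w N n * (1/2 - F N n / 2))"
    proof (rule sum.cong[OF refl])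
      fix n assume "n \<in> {1..N}"
      then have "\<sigma> N n > 0" "\<sigma> N 1 > 0" using sigma_pos by auto
      then show "1 / (2 * \<sigma> N n) ^ 4 * (LINT t|lborel. (sin (t / \<sigma> N n))\<^sup>2 * p (t / \<sigma> N 1) / \<sigma> N 1)
          = w N n * (1/2 - F N n / 2)"
        by (subst int_id[OF _ _ p_meas p_int p_total]) (auto simp: w_def F_def)
    qed
    also have "\<dots> = S N/2 - T N/2"
      by (simp add: S_def T_def sum_subtractf sum_divide_distrib right_diff_distrib)
    finally show "h_seq \<alpha> \<sigma> p N = ((1/\<alpha>) * (S N/2 - T N/2)) powr (-1/4)"
      unfolding h_seq_def by simp
  qed
  have hbN: "\<And>N. hbar_seq \<alpha> \<sigma> N = ((1/\<alpha>) * (S N/2)) powr (-1/4)"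
    unfolding hbar_seq_def S_def w_def by (simp add: sum_divide_distrib)
  have lim1: "(\<lambda>N. (1 - A N) powr (1/4)) \<longlonglongrightarrow> 1"
    using tendsto_powr[OF tendsto_diff[OF tendsto_const[of "1::real"] Alim] tendsto_const[of "1/4"]] by simp
  have evA: "eventually (\<lambda>N. \<bar>A N\<bar> < 1/2) sequentially"
    proof -
    obtain no where "\<forall>n\<ge>no. norm (A n - 0) < 1/2" using LIMSEQ_D[OF Alim, of "1/2"] by auto
    then show ?thesis unfolding eventually_sequentially by auto
  qed
  have ev: "eventually (\<lambda>N. (1 - A N) powr (1/4) = hbar_seq \<alpha> \<sigma> N / h_seq \<alpha> \<sigma> p N) sequentially"
  proof -
    have "eventually (\<lambda>N. 1 \<le> N \<and> \<bar>A N\<bar> < 1/2) sequentially"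
      using eventually_conj[OF eventually_ge_at_top[of "1::nat"] evA] by simp
    then show ?thesis
    proof (rule eventually_mono)
      fix N :: nat assume h: "1 \<le> N \<and> \<bar>A N\<bar> < 1/2"
      define Y where "Y = (1/\<alpha>) * (S N/2)"
      have Y: "Y > 0" using Spos[of N] h alpha_pos by (simp add: Y_def)
      have a1: "1 - A N > 0" using h by linarith
      have eq: "(1/\<alpha>) * (S N/2 - T N/2) = Y * (1 - A N)"
        proof -
        have "S N \<noteq> 0" "\<alpha> \<noteq> 0" using Spos[of N] h alpha_pos by auto
        then show ?thesis by (simp add: Y_def A_def field_simps)
      qed
      have "hbar_seq \<alpha> \<sigma> N / h_seq \<alpha> \<sigma> p N = Y powr (-1/4) / (Y * (1 - A N)) powr (-1/4)"
        using hN[of N] hbN[of N] h eq by (simp add: Y_def)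
      also have "\<dots> = (1 - A N) powr (1/4)"
        using Y a1 by (simp add: powr_mult powr_minus_divide)
      finally show "(1 - A N) powr (1/4) = hbar_seq \<alpha> \<sigma> N / h_seq \<alpha> \<sigma> p N" by simp
    qed
  qed
  show ?thesis using Lim_transform_eventually[OF lim1 ev] .
qed

end
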